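(* Let $\gamma_a,\gamma_s>0$, $\sigma_B>0$, $q>0$, $\lambda>0$ and $\varepsilon_a\in(0,1]$. For $T_s\ge0$ let $T_a^{(1)}(T_s)$ be the unique $T_a\ge0$ such that $\lambda T_a+2\varepsilon_a\sigma_B T_a^4=\lambda T_s+\varepsilon_a\sigma_B T_s^4$, and define \[ \Phi(T_s)=\frac{\lambda}{2}\big(T_s-T_a^{(1)}(T_s)\big)+\sigma_B\Big(1-\frac{\varepsilon_a}{2}\Big)T_s^4,\qquad T_s\ge0. \] Then $\Phi$ is strictly increasing and strictly convex on $[0,+\infty)$. Consequently, if $\beta_s$ is the piecewise linear coalbedo described in the context, the system \[ \gamma_a T_a'=-\lambda(T_a-T_s)+\varepsilon_a\sigma_B|T_s|^3T_s-2\varepsilon_a\sigma_B|T_a|^3T_a,\qquad \gamma_s T_s'=-\lambda(T_s-T_a)-\sigma_B|T_s|^3T_s+\varepsilon_a\sigma_B|T_a|^3T_a+q\beta_s(T_s) \] has at most three equilibrium points.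
   Context: The coalbedo is $\beta_s(T)=\beta_{s,-}$ for $T\le T_{s,-}$, $\beta_s(T)=\beta_{s,-}+(\beta_{s,+}-\beta_{s,-})\frac{T-T_{s,-}}{T_{s,+}-T_{s,-}}$ for $T\in[T_{s,-},T_{s,+}]$, and $\beta_s(T)=\beta_{s,+}$ for $T\ge T_{s,+}$, where $T_{s,+}>T_{s,-}>0$ and $\beta_{s,+}>\beta_{s,-}>0$. An equilibrium point is a point $(T_a,T_s)\in[0,\infty)^2$ at which both right-hand sides vanish. *)

theory Defs
  imports "HOL-Analysis.Analysis"
begin

definition strictly_convex_on :: "real set \<Rightarrow> (real \<Rightarrow> real) \<Rightarrow> bool" where
  "strictly_convex_on S f \<longleftrightarrow> convex S \<and>
    (\<forall>x\<in>S. \<forall>y\<in>S. x \<noteq> y \<longrightarrow>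
       (\<forall>u::real. 0 < u \<and> u < 1 \<longrightarrow> f ((1 - u) * x + u * y) < (1 - u) * f x + u * f y))"

definition coalbedo :: "real \<Rightarrow> real \<Rightarrow> real \<Rightarrow> real \<Rightarrow> real \<Rightarrow> real" where
  "coalbedo Tm Tp bm bp T =
     (if T \<le> Tm then bm
      else if T \<le> Tp then bm + (bp - bm) * (T - Tm) / (Tp - Tm)
      else bp)"

definition Ta1 :: "real \<Rightarrow> real \<Rightarrow> real \<Rightarrow> real \<Rightarrow> real" where
  "Ta1 lam eps sig Ts =
     (THE Ta. Ta \<ge> 0 \<and> lam * Ta + 2 * eps * sig * Ta ^ 4 = lam * Ts + eps * sig * Ts ^ 4)"

definition Phi :: "real \<Rightarrow> real \<Rightarrow> real \<Rightarrow> real \<Rightarrow> real" where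
  "Phi lam eps sig Ts = lam / 2 * (Ts - Ta1 lam eps sig Ts) + sig * (1 - eps / 2) * Ts ^ 4"

definition rhs_a :: "real \<Rightarrow> real \<Rightarrow> real \<Rightarrow> real \<Rightarrow> real \<Rightarrow> real \<Rightarrow> real" where
  "rhs_a ga lam eps sig Ta Ts =
     (- lam * (Ta - Ts) + eps * sig * \<bar>Ts\<bar> ^ 3 * Ts - 2 * eps * sig * \<bar>Ta\<bar> ^ 3 * Ta) / ga"

definition rhs_s :: "real \<Rightarrow> real \<Rightarrow> real \<Rightarrow> real \<Rightarrow> real \<Rightarrow> (real \<Rightarrow> real) \<Rightarrow> real \<Rightarrow> real \<Rightarrow> real" where
  "rhs_s gs lam eps sig q beta Ta Ts =
     (- lam * (Ts - Ta) - sig * \<bar>Ts\<bar> ^ 3 * Ts + eps * sig * \<bar>Ta\<bar> ^ 3 * Ta + q * beta Ts) / gs"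

end

theory Submission
  imports Defs
begin

lemma pow4_convex:
  fixes x y u :: real
  assumes "0 \<le> u" "u \<le> 1"
  shows "((1-u) * x+u * y)^4 \<le> (1-u) * x^4 + u * y^4"
proof -
  define P where "P = (1-u) * x^2+u * y^2"
  have d1: "P - ((1-u) * x+u * y)^2 = u * (1-u) * (x-y)^2" unfolding P_def by (simp add: algebra_simps power2_eq_square)
  have "u * (1-u) * (x-y)^2 \<ge> 0" using assms by simp
  hence h1: "((1-u) * x+u * y)^2 \<le> P" using d1 by linarith
  have d2: "(1-u) * x^4 + u * y^4 - P^2 = u * (1-u) * (x^2-y^2)^2" unfolding P_def by (simp add: algebra_simps power2_eq_square power4_eq_xxxx)
  have "u * (1-u) * (x^2-y^2)^2 \<ge> 0" using assms by simp
  hence h2: "P^2 \<le> (1-u) * x^4 + u * y^4" using d2 by linarith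
  have "((1-u) * x+u * y)^4 = (((1-u) * x+u * y)^2)^2" by simp
  also have "\<dots> \<le> P^2" using h1 by (intro power_mono) auto
  finally show ?thesis using h2 by linarith
qed

lemma pow4_sconvex:
  fixes x y u :: real
  assumes "0 < u" "u < 1" "x \<noteq> y"
  shows "((1-u) * x+u * y)^4 < (1-u) * x^4 + u * y^4"
proof -
  define P where "P = (1-u) * x^2+u * y^2"
  have d1: "P - ((1-u) * x+u * y)^2 = u * (1-u) * (x-y)^2" unfolding P_def by (simp add: algebra_simps power2_eq_square)
  have "u * (1-u) * (x-y)^2 > 0" using assms by simp
  hence h1: "((1-u) * x+u * y)^2 < P" using d1 by linarith
  have d2: "(1-u) * x^4 + u * y^4 - P^2 = u * (1-u) * (x^2-y^2)^2" unfolding P_def by (simp add: algebra_simps power2_eq_square power4_eq_xxxx)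
  have "u * (1-u) * (x^2-y^2)^2 \<ge> 0" using assms by simp
  hence h2: "P^2 \<le> (1-u) * x^4 + u * y^4" using d2 by linarith
  have "((1-u) * x+u * y)^4 = (((1-u) * x+u * y)^2)^2" by simp
  also have "\<dots> < P^2" using h1 by (intro power_strict_mono) auto
  finally show ?thesis using h2 by linarith
qed

lemma Ta1_props:
  fixes lam eps sig s :: real
  assumes "lam > 0" "eps > 0" "sig > 0" "s \<ge> 0"
  shows "Ta1 lam eps sig s \<ge> 0 \<and> lam  *  Ta1 lam eps sig s + 2 * eps * sig * (Ta1 lam eps sig s) ^ 4
           = lam  *  s + eps * sig * s^4"
proof -
  let ?h = "\<lambda>a::real. lam  *  a + 2 * eps * sig * a^4"
  let ?P = "\<lambda>a. a \<ge> 0 \<and> ?h a = lam  *  s + eps * sig * s^4"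
  have c: "eps * sig > 0" using assms by simp
  have hmono: "?h a < ?h b" if "0 \<le> a" "a < b" for a b
  proof -
    have "a^4 < b^4" using that by (intro power_strict_mono) auto
    hence "(eps * sig) * a^4 < (eps * sig) * b^4" using c by (rule mult_strict_left_mono)
    moreover have "lam * a < lam * b" using that assms(1) by simp
    ultimately show ?thesis by simp
  qed
  have ex: "\<exists>a. 0 \<le> a \<and> a \<le> s \<and> ?h a = lam  *  s + eps * sig * s^4"
  proof (rule IVT')
    have "0 \<le> eps * sig * s^4" using c by simp
    then show "?h 0 \<le> lam  *  s + eps * sig * s^4" using assms by simp
    have "0 \<le> eps * sig * s^4" using c by simp
    hence "eps * sig * s^4 \<le> 2 * eps * sig * s^4" by simp
    thus "lam  *  s + eps * sig * s^4 \<le> ?h s" by simp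
    show "0 \<le> s" by fact
    show "continuous_on {0..s} ?h" by (intro continuous_intros)
  qed
  have uq: "\<exists>!a. ?P a"
  proof -
    obtain a where a: "0 \<le> a" "?h a = lam  *  s + eps * sig * s^4" using ex by blast
    show ?thesis
    proof (rule ex1I[of _ a])
      show "?P a" using a by simp
      fix b assume "?P b"
      thus "b = a" using a hmono[of a b] hmono[of b a] by (cases "a < b"; cases "b < a") auto
    qed
  qed
  show ?thesis unfolding Ta1_def using theI'[OF uq] by simp
qed

lemma Phi_eq:
  fixes lam eps sig s :: real
  assumes "lam > 0" "eps > 0" "sig > 0" "s \<ge> 0"
  shows "Phi lam eps sig s = eps * sig * (Ta1 lam eps sig s) ^ 4 + sig * (1 - eps) * s ^ 4"
proof -
  define a where "a = Ta1 lam eps sig s"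
  have e: "lam * a + 2 * eps * sig * a ^ 4 = lam * s + eps * sig * s ^ 4"
    using Ta1_props[OF assms] unfolding a_def by simp
  have "Phi lam eps sig s = (lam * s - lam * a) / 2 + sig * (1 - eps / 2) * s ^ 4"
    unfolding Phi_def a_def by (simp add: field_simps)
  also have "lam * s - lam * a = 2 * eps * sig * a ^ 4 - eps * sig * s ^ 4" using e by linarith
  finally show ?thesis unfolding a_def[symmetric] by (simp add: field_simps)
qed

lemma Ta1_mono:
  fixes lam eps sig s t :: real
  assumes "lam > 0" "eps > 0" "sig > 0" "s \<ge> 0" "s < t"
  shows "Ta1 lam eps sig s < Ta1 lam eps sig t"
proof (rule ccontr)
  define a where "a = Ta1 lam eps sig s"
  define b where "b = Ta1 lam eps sig t"
  have c: "eps * sig > 0" using assms by simp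
  have ea: "a \<ge> 0 \<and> lam * a + 2 * eps * sig * a ^ 4 = lam * s + eps * sig * s ^ 4"
    using Ta1_props[OF assms(1-4)] unfolding a_def by simp
  have eb: "b \<ge> 0 \<and> lam * b + 2 * eps * sig * b ^ 4 = lam * t + eps * sig * t ^ 4"
    using Ta1_props[OF assms(1-3), of t] assms unfolding b_def by simp
  assume "\<not> Ta1 lam eps sig s < Ta1 lam eps sig t"
  hence "b \<le> a" unfolding a_def b_def by simp
  hence "b ^ 4 \<le> a ^ 4" using eb by (intro power_mono) auto
  hence "(2 * eps * sig) * b ^ 4 \<le> (2 * eps * sig) * a ^ 4" using c by (intro mult_left_mono) auto
  moreover have "lam * b \<le> lam * a" using \<open>b \<le> a\<close> assms by simp
  moreover have "s ^ 4 < t ^ 4" using assms by (intro power_strict_mono) auto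
  hence "(eps * sig) * s ^ 4 < (eps * sig) * t ^ 4" using c by (intro mult_strict_left_mono) auto
  moreover have "lam * s < lam * t" using assms by simp
  ultimately show False using ea eb by simp
qed

lemma Phi_mono:
  fixes lam eps sig s t :: real
  assumes "lam > 0" "eps > 0" "eps \<le> 1" "sig > 0" "s \<ge> 0" "s < t"
  shows "Phi lam eps sig s < Phi lam eps sig t"
proof -
  define a where "a = Ta1 lam eps sig s"
  define b where "b = Ta1 lam eps sig t"
  have c: "eps * sig > 0" using assms by simp
  have "a < b" using Ta1_mono[of lam eps sig s t] assms unfolding a_def b_def by simp
  moreover have "a \<ge> 0" using Ta1_props[of lam eps sig s] assms unfolding a_def by simp
  ultimately have "a ^ 4 < b ^ 4" by (intro power_strict_mono) auto
  hence 1: "(eps * sig) * a ^ 4 < (eps * sig) * b ^ 4" using c by (intro mult_strict_left_mono) auto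
  have "s ^ 4 \<le> t ^ 4" using assms by (intro power_mono) auto
  hence 2: "(sig * (1 - eps)) * s ^ 4 \<le> (sig * (1 - eps)) * t ^ 4" using assms by (intro mult_left_mono) auto
  have "Phi lam eps sig s = eps * sig * a ^ 4 + sig * (1 - eps) * s ^ 4"
    using Phi_eq[of lam eps sig s] assms unfolding a_def by simp
  moreover have "Phi lam eps sig t = eps * sig * b ^ 4 + sig * (1 - eps) * t ^ 4"
    using Phi_eq[of lam eps sig t] assms unfolding b_def by simp
  ultimately show ?thesis using 1 2 by linarith
qed

lemma Phi_convex:
  fixes lam eps sig :: real
  assumes "lam > 0" "eps > 0" "eps \<le> 1" "sig > 0"
  shows "strictly_convex_on {0..} (Phi lam eps sig)"
  unfolding strictly_convex_on_def
proof (intro conjI ballI impI allI)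
  show "convex {0::real..}" by (rule convex_real_interval)
  fix x y u :: real
  assume x: "x \<in> {0..}" and y: "y \<in> {0..}" and xy: "x \<noteq> y" and u: "0 < u \<and> u < 1"
  define m where "m = (1 - u) * x + u * y"
  have x0: "x \<ge> 0" and y0: "y \<ge> 0" using x y by auto
  have m0: "m \<ge> 0" unfolding m_def using x0 y0 u by simp
  have c: "eps * sig > 0" using assms by simp
  define ax where "ax = Ta1 lam eps sig x"
  define ay where "ay = Ta1 lam eps sig y"
  define am where "am = Ta1 lam eps sig m"
  have ex: "ax \<ge> 0 \<and> lam * ax + 2 * eps * sig * ax ^ 4 = lam * x + eps * sig * x ^ 4"
    using Ta1_props[of lam eps sig x] assms x0 unfolding ax_def by simp
  have ey: "ay \<ge> 0 \<and> lam * ay + 2 * eps * sig * ay ^ 4 = lam * y + eps * sig * y ^ 4"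
    using Ta1_props[of lam eps sig y] assms y0 unfolding ay_def by simp
  have em: "am \<ge> 0 \<and> lam * am + 2 * eps * sig * am ^ 4 = lam * m + eps * sig * m ^ 4"
    using Ta1_props[of lam eps sig m] assms m0 unfolding am_def by simp
  have A: "am ^ 4 < (1 - u) * ax ^ 4 + u * ay ^ 4"
  proof (rule ccontr)
    define X where "X = (1 - u) * ax ^ 4 + u * ay ^ 4"
    define b where "b = (1 - u) * ax + u * ay"
    assume "\<not> am ^ 4 < (1 - u) * ax ^ 4 + u * ay ^ 4"
    hence amX: "X \<le> am ^ 4" unfolding X_def by simp
    have bX: "b ^ 4 \<le> X" unfolding b_def X_def using pow4_convex[of u ax ay] u by simp
    have "b \<le> am"
    proof (rule ccontr)
      assume "\<not> b \<le> am"
      hence "am ^ 4 < b ^ 4" using em by (intro power_strict_mono) auto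
      thus False using amX bX by simp
    qed
    have "m ^ 4 < (1 - u) * x ^ 4 + u * y ^ 4" unfolding m_def using pow4_sconvex[of u x y] u xy by simp
    hence R: "(eps * sig) * m ^ 4 < (eps * sig) * ((1 - u) * x ^ 4 + u * y ^ 4)" using c by (intro mult_strict_left_mono) auto
    have "lam * am + 2 * eps * sig * am ^ 4 \<ge> lam * b + 2 * eps * sig * X"
    proof -
      have "lam * b \<le> lam * am" using \<open>b \<le> am\<close> assms by simp
      moreover have "(2 * eps * sig) * X \<le> (2 * eps * sig) * am ^ 4" using amX c by (intro mult_left_mono) auto
      ultimately show ?thesis by simp
    qed
    also have "lam * b + 2 * eps * sig * X = (1 - u) * (lam * ax + 2 * eps * sig * ax ^ 4) + u * (lam * ay + 2 * eps * sig * ay ^ 4)"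
      unfolding b_def X_def by (simp add: algebra_simps)
    also have "\<dots> = (1 - u) * (lam * x + eps * sig * x ^ 4) + u * (lam * y + eps * sig * y ^ 4)"
      using ex ey by simp
    also have "\<dots> = lam * m + (eps * sig) * ((1 - u) * x ^ 4 + u * y ^ 4)"
      unfolding m_def by (simp add: algebra_simps)
    finally show False using em R by simp
  qed
  have B: "m ^ 4 \<le> (1 - u) * x ^ 4 + u * y ^ 4" unfolding m_def using pow4_convex[of u x y] u by simp
  have A': "(eps * sig) * am ^ 4 < (eps * sig) * ((1 - u) * ax ^ 4 + u * ay ^ 4)" using A c by (intro mult_strict_left_mono) auto
  have B': "(sig * (1 - eps)) * m ^ 4 \<le> (sig * (1 - eps)) * ((1 - u) * x ^ 4 + u * y ^ 4)"
    using B assms by (intro mult_left_mono) auto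
  have "Phi lam eps sig m = eps * sig * am ^ 4 + sig * (1 - eps) * m ^ 4"
    using Phi_eq[of lam eps sig m] assms m0 unfolding am_def by simp
  also have "\<dots> < (eps * sig) * ((1 - u) * ax ^ 4 + u * ay ^ 4) + (sig * (1 - eps)) * ((1 - u) * x ^ 4 + u * y ^ 4)"
    using A' B' by simp
  also have "\<dots> = (1 - u) * (eps * sig * ax ^ 4 + sig * (1 - eps) * x ^ 4) + u * (eps * sig * ay ^ 4 + sig * (1 - eps) * y ^ 4)"
    by (simp add: algebra_simps)
  also have "\<dots> = (1 - u) * Phi lam eps sig x + u * Phi lam eps sig y"
    using Phi_eq[of lam eps sig x] Phi_eq[of lam eps sig y] assms x0 y0 unfolding ax_def ay_def by simp
  finally show "Phi lam eps sig ((1 - u) * x + u * y) < (1 - u) * Phi lam eps sig x + u * Phi lam eps sig y"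
    unfolding m_def .
qed

lemma Ta1_unique:
  fixes lam eps sig s a :: real
  assumes "lam > 0" "eps > 0" "sig > 0" "s \<ge> 0" "a \<ge> 0"
    and e: "lam * a + 2 * eps * sig * a ^ 4 = lam * s + eps * sig * s ^ 4"
  shows "a = Ta1 lam eps sig s"
proof -
  define b where "b = Ta1 lam eps sig s"
  have eb: "b \<ge> 0 \<and> lam * b + 2 * eps * sig * b ^ 4 = lam * s + eps * sig * s ^ 4"
    using Ta1_props[OF assms(1-4)] unfolding b_def by simp
  have c: "eps * sig > 0" using assms by simp
  have hmono: "lam * v + 2 * eps * sig * v ^ 4 < lam * w + 2 * eps * sig * w ^ 4" if "0 \<le> v" "v < w" for v w
  proof -
    have "v^4 < w^4" using that by (intro power_strict_mono) auto
    hence "(eps * sig) * v^4 < (eps * sig) * w^4" using c by (rule mult_strict_left_mono)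
    moreover have "lam * v < lam * w" using that assms(1) by simp
    ultimately show ?thesis by simp
  qed
  show ?thesis unfolding b_def[symmetric]
    using hmono[of a b] hmono[of b a] eb e assms(5) by (cases "a < b"; cases "b < a") auto
qed

lemma card_le3:
  fixes Z :: "real set"
  assumes H: "\<And>z1 z2 z3 z4. z1 \<in> Z \<Longrightarrow> z2 \<in> Z \<Longrightarrow> z3 \<in> Z \<Longrightarrow> z4 \<in> Z
      \<Longrightarrow> z1 < z2 \<Longrightarrow> z2 < z3 \<Longrightarrow> z3 < z4 \<Longrightarrow> False"
  shows "finite Z \<and> card Z \<le> 3"
proof (rule ccontr)
  assume nt: "\<not> (finite Z \<and> card Z \<le> 3)"
  obtain F where F: "F \<subseteq> Z" "card F = 4" "finite F"
  proof (cases "finite Z")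
    case True
    hence "4 \<le> card Z" using nt by simp
    thus ?thesis using obtain_subset_with_card_n that by metis
  next
    case False
    thus ?thesis using infinite_arbitrarily_large that by metis
  qed
  define l where "l = sorted_list_of_set F"
  have len: "length l = 4" unfolding l_def using F by simp
  have sl: "set l = F" unfolding l_def using F by simp
  have so: "sorted_wrt (<) l" unfolding l_def by simp
  have lt: "l ! i < l ! j" if "i < j" "j < 4" for i j
    using so len that unfolding sorted_wrt_iff_nth_less by auto
  have mem: "l ! i \<in> Z" if "i < 4" for i
    using nth_mem[of i l] len sl F that by auto
  show False using H[OF mem mem mem mem lt lt lt, of 0 1 2 3] by simp
qed

lemma coalbedo_mid:
  assumes "Tm < Tp" "Tm \<le> T" "T \<le> Tp"
  shows "coalbedo Tm Tp bm bp T = bm + (bp - bm) * (T - Tm) / (Tp - Tm)"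
  using assms unfolding coalbedo_def by auto

theorem lemma6p3:
  fixes ga gs sig q lam eps Tm Tp bm bp :: real
  assumes "ga > 0" "gs > 0" "sig > 0" "q > 0" "lam > 0"
    and "0 < eps" "eps \<le> 1"
    and "0 < Tm" "Tm < Tp" "0 < bm" "bm < bp"
  shows "strict_mono_on {0..} (Phi lam eps sig)
    \<and> strictly_convex_on {0..} (Phi lam eps sig)
    \<and> (let E = {(Ta, Ts). Ta \<ge> 0 \<and> Ts \<ge> 0
                  \<and> rhs_a ga lam eps sig Ta Ts = 0
                  \<and> rhs_s gs lam eps sig q (coalbedo Tm Tp bm bp) Ta Ts = 0}
       in finite E \<and> card E \<le> 3)"
proof -
  let ?P = "Phi lam eps sig"
  let ?b = "coalbedo Tm Tp bm bp"
  have SM: "strict_mono_on {0..} ?P"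
    by (rule strict_mono_onI) (use Phi_mono[of lam eps sig] assms in auto)
  have SC: "strictly_convex_on {0..} ?P" using Phi_convex[of lam eps sig] assms by simp
  define g where "g s = ?P s - q * ?b s" for s
  define Z where "Z = {s. 0 \<le> s \<and> g s = 0}"
  have M1: "g x < g y" if "0 \<le> x" "x < y" "y \<le> Tm" for x y
  proof -
    have "?b x = bm" "?b y = bm" using that unfolding coalbedo_def by auto
    thus ?thesis unfolding g_def using Phi_mono[of lam eps sig x y] assms that by simp
  qed
  have M2: "g x < g y" if "Tp \<le> x" "x < y" for x y
  proof -
    have "?b x = bp" "?b y = bp" using that assms unfolding coalbedo_def by auto
    thus ?thesis unfolding g_def using Phi_mono[of lam eps sig x y] assms that by simp
  qed
  have C3: "(z - x) * g y < (z - y) * g x + (y - x) * g z"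
    if "Tm \<le> x" "x < y" "y < z" "z \<le> Tp" for x y z
  proof -
    define u where "u = (y - x) / (z - x)"
    have u: "0 < u" "u < 1" unfolding u_def using that by auto
    have nz: "z - x \<noteq> 0" using that by simp
    have uz: "u * (z - x) = y - x" unfolding u_def using nz by simp
    have uz2: "(1 - u) * (z - x) = z - y" using uz by (simp add: algebra_simps)
    moreover have "(1 - u) * x + u * z = x + u * (z - x)" by (simp add: algebra_simps)
    ultimately have yu: "(1 - u) * x + u * z = y" using uz by simp
    have "?P ((1 - u) * x + u * z) < (1 - u) * ?P x + u * ?P z"
      using SC that assms u unfolding strictly_convex_on_def by auto
    hence "?P y < (1 - u) * ?P x + u * ?P z" using yu by simp
    hence "(z - x) * ?P y < (z - x) * ((1 - u) * ?P x + u * ?P z)"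
      using that by (intro mult_strict_left_mono) auto
    also have "(z - x) * ((1 - u) * ?P x + u * ?P z) = ((1 - u) * (z - x)) * ?P x + (u * (z - x)) * ?P z"
      by (simp add: algebra_simps)
    also have "\<dots> = (z - y) * ?P x + (y - x) * ?P z" unfolding uz uz2 ..
    finally have A: "(z - x) * ?P y < (z - y) * ?P x + (y - x) * ?P z" .
    define k where "k = (bp - bm) / (Tp - Tm)"
    have bl: "?b t = bm + k * (t - Tm)" if "Tm \<le> t" "t \<le> Tp" for t
      using coalbedo_mid[of Tm Tp t bm bp] assms that unfolding k_def by simp
    have B: "(z - x) * ?b y = (z - y) * ?b x + (y - x) * ?b z"
    proof -
      have e1: "?b x = bm + k * (x - Tm)" and e2: "?b y = bm + k * (y - Tm)" and e3: "?b z = bm + k * (z - Tm)"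
        using bl[of x] bl[of y] bl[of z] that by auto
      show ?thesis unfolding e1 e2 e3 by (simp add: algebra_simps)
    qed
    have "(z - x) * g y = (z - x) * ?P y - q * ((z - x) * ?b y)" unfolding g_def by (simp add: algebra_simps)
    also have "\<dots> < (z - y) * ?P x + (y - x) * ?P z - q * ((z - y) * ?b x + (y - x) * ?b z)"
      using A B by simp
    also have "\<dots> = (z - y) * g x + (y - x) * g z" unfolding g_def by (simp add: algebra_simps)
    finally show ?thesis .
  qed
  have Zc: "finite Z \<and> card Z \<le> 3"
  proof (rule card_le3)
    fix z1 z2 z3 z4 assume z: "z1 \<in> Z" "z2 \<in> Z" "z3 \<in> Z" "z4 \<in> Z"
      and o: "z1 < z2" "z2 < z3" "z3 < z4"
    have g0: "g z1 = 0" "g z2 = 0" "g z3 = 0" "g z4 = 0" "z1 \<ge> 0" using z unfolding Z_def by auto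
    have a2: "Tm < z2" using M1[of z1 z2] g0 o by force
    have a3: "z3 < Tp" using M2[of z3 z4] g0 o by force
    have a1: "z1 < Tm" using C3[of z1 z2 z3] g0 o a2 a3 by force
    have a4: "Tp < z4" using C3[of z2 z3 z4] g0 o a2 a3 by force
    have gTp: "g Tp < 0" using M2[of Tp z4] a4 g0 by simp
    have "(Tp - z2) * g z3 < (Tp - z3) * g z2 + (z3 - z2) * g Tp" using C3[of z2 z3 Tp] a2 a3 o by simp
    moreover have "(z3 - z2) * g Tp < 0" using gTp o by (simp add: mult_pos_neg)
    ultimately show False using g0 by simp
  qed
  define E where "E = {(Ta, Ts). Ta \<ge> 0 \<and> Ts \<ge> 0
                  \<and> rhs_a ga lam eps sig Ta Ts = 0
                  \<and> rhs_s gs lam eps sig q (coalbedo Tm Tp bm bp) Ta Ts = 0}"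
  have sub: "E \<subseteq> (\<lambda>s. (Ta1 lam eps sig s, s)) ` Z"
  proof
    fix p assume "p \<in> E"
    then obtain a s where p: "p = (a, s)" and a: "a \<ge> 0" and s: "s \<ge> 0"
      and ra: "rhs_a ga lam eps sig a s = 0" and rs: "rhs_s gs lam eps sig q ?b a s = 0"
      unfolding E_def by auto
    have a4: "\<bar>a\<bar> ^ 3 * a = a ^ 4" using a by (simp add: power4_eq_xxxx power3_eq_cube)
    have s4: "\<bar>s\<bar> ^ 3 * s = s ^ 4" using s by (simp add: power4_eq_xxxx power3_eq_cube)
    have na: "- lam * (a - s) + eps * sig * s ^ 4 - 2 * eps * sig * a ^ 4 = 0"
      using ra assms(1) unfolding rhs_a_def by (simp add: mult.assoc a4 s4)
    have ns: "- lam * (s - a) - sig * s ^ 4 + eps * sig * a ^ 4 + q * ?b s = 0"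
      using rs assms(2) unfolding rhs_s_def by (simp add: mult.assoc a4 s4)
    have ea: "lam * a + 2 * eps * sig * a ^ 4 = lam * s + eps * sig * s ^ 4" using na by (simp add: algebra_simps)
    have aeq: "a = Ta1 lam eps sig s" using Ta1_unique[OF assms(5) assms(6) assms(3) s a ea] .
    have "?P s = eps * sig * a ^ 4 + sig * (1 - eps) * s ^ 4" using Phi_eq[of lam eps sig s] assms s aeq by simp
    hence "g s = 0" unfolding g_def using ns ea by (simp add: algebra_simps)
    thus "p \<in> (\<lambda>s. (Ta1 lam eps sig s, s)) ` Z" unfolding Z_def p aeq using s by auto
  qed
  have "finite E" using sub Zc finite_subset by blast
  moreover have "card E \<le> 3"
    using card_mono[OF _ sub] card_image_le[of Z "\<lambda>s. (Ta1 lam eps sig s, s)"] Zc by auto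
  ultimately show ?thesis using SM SC unfolding E_def Let_def by simp
qed

end
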